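(* Let $w^1,\dots,w^k$ be the functions defined below from the solution of the linear system (L). If $t_0$ is sufficiently large, there exists $C>0$ such that $\|w^i(\tau)\|_{L^2(0,\infty)}\le C$ for all $\tau\ge0$ and all $i\in\{1,\dots,k\}$.
   Context: Setting: $f$ Fisher–KPP ($f\in C^2([0,1])$, $f(0)=f(1)=0$, $f'(0)>0$, $f'(1)<0$, $0<f(s)\le f'(0)s$ on $(0,1)$), $c_*=2\sqrt{f'(0)}$, $\lambda_*=\sqrt{f'(0)}$, $k\ge2$, $\alpha>0$, $t_0>0$. System (L): for $t>0,x>0$, $V^i_t-c_*V^i_x+\frac{3/2+i-k}{\lambda_*(t+t_0)}V^i_x=V^i_{xx}+f'(0)V^i+\alpha V^{i+1}(t,x+\frac{\ln(t+t_0)}{\lambda_*})$ for $1\le i\le k-1$, $V^k_t-c_*V^k_x+\frac{3/2}{\lambda_*(t+t_0)}V^k_x=V^k_{xx}+f'(0)V^k$, $V^i(t,0)=0$, with nonnegative compactly supported nontrivial initial data on $(0,\infty)$. Set $\tau=\ln(t+t_0)-\ln t_0$, $\eta=x/\sqrt{t+t_0}$ and define $w^i$ by $V^i(t,x)=e^{-\lambda_*x}e^{\tau/2}e^{-\eta^2/8}w^i(\tau,\eta)$. With $\varepsilon=\frac{1}{\lambda_*\sqrt{t_0}}$, $\delta(\tau)=\frac{\tau+\ln t_0}{\lambda_*\sqrt{t_0e^\tau}}$, and $Mw=-w_{\eta\eta}+(\frac{\eta^2}{16}-\frac34)w$, the $w^i$ satisfy on $\eta>0$: $w^i_\tau+Mw^i+(k-i)w^i=-(\frac32+i-k)\varepsilon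 e^{-\tau/2}(w^i_\eta-\frac\eta4w^i)+\alpha\mathcal T_i[w^{i+1}]$ for $i\le k-1$, $w^k_\tau+Mw^k=-\frac32\varepsilon e^{-\tau/2}(w^k_\eta-\frac\eta4 w^k)$, $w^i(\tau,0)=0$, where $\mathcal T_i[w](\tau,\eta)=w(\tau,\eta+\delta(\tau))e^{-\delta(\tau)^2/8}e^{-\eta\delta(\tau)/4}$. *)

theory Defs
  imports "HOL-Analysis.Analysis"
begin

text \<open>Parameters: a = f'(0), lambda_* = sqrt a, c_* = 2 sqrt a.\<close>

definition L_rhs_coeff :: "nat \<Rightarrow> nat \<Rightarrow> real" where
  "L_rhs_coeff k i = (if i < k then 3/2 + real i - real k else 3/2)"

definition is_sol_L ::
  "real \<Rightarrow> nat \<Rightarrow> real \<Rightarrow> real \<Rightarrow> (nat \<Rightarrow> real \<Rightarrow> real)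
     \<Rightarrow> (nat \<Rightarrow> real \<Rightarrow> real \<Rightarrow> real) \<Rightarrow> bool" where
  "is_sol_L a k \<alpha> t0 V0 V \<longleftrightarrow>
     (\<forall>i\<in>{1..k}.
        continuous_on ({0..} \<times> {0..}) (\<lambda>(t,x). V i t x)
      \<and> (\<forall>T>0. \<exists>B. \<forall>t\<in>{0..T}. \<forall>x\<ge>0. \<bar>V i t x\<bar> \<le> B)
      \<and> (\<forall>t\<ge>0. V i t 0 = 0)
      \<and> (\<forall>x\<ge>0. V i 0 x = V0 i x)
      \<and> (\<exists>Vt Vx Vxx :: real \<Rightarrow> real \<Rightarrow> real.
            continuous_on ({0<..} \<times> {0<..}) (\<lambda>(t,x). Vt t x)
          \<and> continuous_on ({0<..} \<times> {0<..}) (\<lambda>(t,x). Vx t x)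
          \<and> continuous_on ({0<..} \<times> {0<..}) (\<lambda>(t,x). Vxx t x)
          \<and> (\<forall>t>0. \<forall>x>0.
               ((\<lambda>s. V i s x) has_real_derivative Vt t x) (at t)
             \<and> ((\<lambda>y. V i t y) has_real_derivative Vx t x) (at x)
             \<and> ((\<lambda>y. Vx t y) has_real_derivative Vxx t x) (at x)
             \<and> Vt t x - 2 * sqrt a * Vx t x
                 + L_rhs_coeff k i / (sqrt a * (t + t0)) * Vx t x
               = Vxx t x + a * V i t x
                 + (if i < k then \<alpha> * V (i+1) t (x + ln (t + t0) / sqrt a) else 0))))"

text \<open>The rescaled functions: V^i(t,x) = e^{-lambda x} e^{tau/2} e^{-eta^2/8} w^i(tau,eta),
  with tau = ln(t+t0) - ln t0, eta = x / sqrt(t+t0), i.e. t = t0 e^tau - t0,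
  x = eta sqrt(t0 e^tau).\<close>

definition w_of ::
  "real \<Rightarrow> real \<Rightarrow> (nat \<Rightarrow> real \<Rightarrow> real \<Rightarrow> real) \<Rightarrow> nat \<Rightarrow> real \<Rightarrow> real \<Rightarrow> real" where
  "w_of a t0 V i \<tau> \<eta> =
     (let t = t0 * exp \<tau> - t0; x = \<eta> * sqrt (t0 * exp \<tau>)
      in exp (sqrt a * x) * exp (- \<tau> / 2) * exp (\<eta>\<^sup>2 / 8) * V i t x)"

end

theory Submission
  imports Defs
begin

lemma S_dt:
  fixes g h \<sigma> :: "real \<Rightarrow> real"
  assumes "(g has_real_derivative g') (at t)" "(h has_real_derivative h') (at t)"
    "(\<sigma> has_real_derivative \<sigma>') (at t)" "\<sigma> t \<noteq> 0"
  shows "((\<lambda>t. A * g t * (x + h t) * exp(-l*x) * exp(-x\<^sup>2/(4*\<sigma> t))) has_real_derivative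
     A*exp(-l*x)*exp(-x\<^sup>2/(4*\<sigma> t))*(g'*(x + h t) + g t*h' + g t*(x+h t)*\<sigma>'*x\<^sup>2/(4*(\<sigma> t)\<^sup>2))) (at t)"
  using assms
  by (auto intro!: derivative_eq_intros simp: field_simps power2_eq_square)

lemma S_dx:
  assumes "\<sigma> \<noteq> 0"
  shows "((\<lambda>x. A*G*(x+h)*exp(-l*x)*exp(-x\<^sup>2/(4*\<sigma>))) has_real_derivative
     A*G*exp(-l*x)*exp(-x\<^sup>2/(4*\<sigma>))*(1 + (x+h)*(-l - x/(2*\<sigma>)))) (at x)"
  using assms
  by (auto intro!: derivative_eq_intros simp: field_simps power2_eq_square)

lemma S_dxx:
  assumes "\<sigma> \<noteq> 0"
  shows "((\<lambda>x. A*G*exp(-l*x)*exp(-x\<^sup>2/(4*\<sigma>))*(1 + (x+h)*(-l - x/(2*\<sigma>)))) has_real_derivative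
     A*G*exp(-l*x)*exp(-x\<^sup>2/(4*\<sigma>))*(2*(-l - x/(2*\<sigma>)) + (x+h)*((l + x/(2*\<sigma>))\<^sup>2 - 1/(2*\<sigma>)))) (at x)"
  using assms
  by (auto intro!: derivative_eq_intros simp: field_simps power2_eq_square)

lemma S_op:
  fixes A G G' h h' \<sigma> \<sigma>' x l c ss X Eg :: real
  assumes "l \<noteq> 0" "ss \<noteq> 0" "\<sigma> \<noteq> 0"
  shows "A*X*Eg*(G'*(x + h) + G*h' + G*(x+h)*\<sigma>'*x\<^sup>2/(4*\<sigma>\<^sup>2))
     - 2*l*(A*G*X*Eg*(1 + (x+h)*(-l - x/(2*\<sigma>))))
     + c/(l * ss) * (A*G*X*Eg*(1 + (x+h)*(-l - x/(2*\<sigma>))))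
     - A*G*X*Eg*(2*(-l - x/(2*\<sigma>)) + (x+h)*((l + x/(2*\<sigma>))\<^sup>2 - 1/(2*\<sigma>)))
     - l\<^sup>2 * (A*G*(x+h)*X*Eg)
   = A*X*Eg*(G'*(x+h) + G*(h' + (c/l)/ss - h/\<sigma> + (x+h)*((\<sigma>'-1)*x\<^sup>2/(4*\<sigma>\<^sup>2) - (c/l)*x/(2 * ss*\<sigma>) + 3/(2*\<sigma>) - c/ss)))"
  using assms by (simp add: field_simps power2_eq_square)

lemma br_bound:
  fixes r x \<gamma> c K \<sigma> :: real
  assumes r: "r > 0" and K: "K \<ge> \<gamma>\<^sup>2/4 + 3" and \<sigma>: "\<sigma> = r\<^sup>2 + 2*r"
  shows "K/(r\<^sup>2*r) + (1/r)*x\<^sup>2/(4*\<sigma>\<^sup>2) - \<gamma>*x/(2*r\<^sup>2*\<sigma>) + 3/(2*\<sigma>) - c/r\<^sup>2 \<ge> (3/2 - c)/r\<^sup>2"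
proof -
  have \<sigma>0: "\<sigma> > 0" using r \<sigma> by (simp add: add_pos_pos)
  have i1: "(1/r)*x\<^sup>2/(4*\<sigma>\<^sup>2) - \<gamma>*x/(2*r\<^sup>2*\<sigma>) + \<gamma>\<^sup>2/(4*r\<^sup>2*r) = (x/\<sigma> - \<gamma>/r)\<^sup>2/(4*r)"
    using r \<sigma>0 by (simp add: field_simps power2_eq_square)
  have i1': "(x/\<sigma> - \<gamma>/r)\<^sup>2/(4*r) \<ge> 0" using r by simp
  have e2a: "3/(2*r\<^sup>2) - 3/(2*\<sigma>) = 3*(\<sigma> - r\<^sup>2)/(2*r\<^sup>2*\<sigma>)"
    using r \<sigma>0 by (simp add: field_simps)
  have e2b: "\<sigma> - r\<^sup>2 = 2*r" using \<sigma> by simp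
  have e2c: "3*(2*r)/(2*r\<^sup>2*\<sigma>) = 3/(r*\<sigma>)" using r \<sigma>0 by (simp add: field_simps power2_eq_square)
  have e2: "3/(2*r\<^sup>2) - 3/(2*\<sigma>) = 3/(r*\<sigma>)" using e2a e2b e2c by simp
  have "r * \<sigma> \<ge> r * r\<^sup>2" using r \<sigma> by (intro mult_left_mono) auto
  hence i2: "3/(r*\<sigma>) \<le> 3/(r\<^sup>2*r)" using r \<sigma>0
    by (simp add: divide_left_mono mult.commute mult_pos_pos)
  have i3: "K/(r\<^sup>2*r) \<ge> (\<gamma>\<^sup>2/4 + 3)/(r\<^sup>2*r)" using K r by (simp add: divide_right_mono)
  have e3: "(\<gamma>\<^sup>2/4 + 3)/(r\<^sup>2*r) = \<gamma>\<^sup>2/(4*r\<^sup>2*r) + 3/(r\<^sup>2*r)" using r by (simp add: field_simps)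
  have e4: "(3/2 - c)/r\<^sup>2 = 3/(2*r\<^sup>2) - c/r\<^sup>2" using r by (simp add: field_simps)
  show ?thesis using i1 i1' e2 i2 i3 e3 e4 by linarith
qed

lemma z_bound:
  fixes r x c K \<sigma> \<sigma>' \<rho> p h h' lam :: real
  assumes r: "r > 0" and \<rho>: "\<rho> = r\<^sup>2" and \<sigma>: "\<sigma> = r\<^sup>2 + 2*r" and \<sigma>': "\<sigma>' = 1 + 1/r"
    and p: "p \<ge> 0" and h: "h \<ge> 0" and K: "K \<ge> (c/lam)\<^sup>2/4 + 3"
  shows "\<rho> * (K*p/(\<rho>*r) + (h' + (c/lam)/\<rho> - h/\<sigma> + p*((\<sigma>'-1)*x\<^sup>2/(4*\<sigma>\<^sup>2) - (c/lam)*x/(2*\<rho>*\<sigma>) + 3/(2*\<sigma>) - c/\<rho>)))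
     \<ge> h'*\<rho> + c/lam - h + p*(3/2 - c)"
proof -
  have \<sigma>0: "\<sigma> > 0" using r \<sigma> by (simp add: add_pos_pos)
  have \<rho>0: "\<rho> > 0" using r \<rho> by simp
  have B: "K/(r\<^sup>2*r) + (1/r)*x\<^sup>2/(4*\<sigma>\<^sup>2) - (c/lam)*x/(2*r\<^sup>2*\<sigma>) + 3/(2*\<sigma>) - c/r\<^sup>2 \<ge> (3/2 - c)/r\<^sup>2"
    by (rule br_bound[OF r K \<sigma>])
  define Br where "Br = K/(r\<^sup>2*r) + (1/r)*x\<^sup>2/(4*\<sigma>\<^sup>2) - (c/lam)*x/(2*r\<^sup>2*\<sigma>) + 3/(2*\<sigma>) - c/r\<^sup>2"
  have e1: "K*p/(\<rho>*r) + (h' + (c/lam)/\<rho> - h/\<sigma> + p*((\<sigma>'-1)*x\<^sup>2/(4*\<sigma>\<^sup>2) - (c/lam)*x/(2*\<rho>*\<sigma>) + 3/(2*\<sigma>) - c/\<rho>))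
      = h' + (c/lam)/\<rho> - h/\<sigma> + p * Br"
    unfolding Br_def \<rho> \<sigma>' by (simp add: algebra_simps)
  have pB: "p * Br \<ge> p * ((3/2 - c)/r\<^sup>2)" using B p unfolding Br_def by (intro mult_left_mono) auto
  have hs: "h/\<sigma> \<le> h/\<rho>" using h \<rho>0 \<sigma>0 \<rho> \<sigma> r by (intro divide_left_mono) auto
  have "\<rho> * (h' + (c/lam)/\<rho> - h/\<sigma> + p * Br) \<ge> \<rho> * (h' + (c/lam)/\<rho> - h/\<rho> + p * ((3/2 - c)/r\<^sup>2))"
    using pB hs \<rho>0 by (intro mult_left_mono) auto
  also have "\<rho> * (h' + (c/lam)/\<rho> - h/\<rho> + p * ((3/2 - c)/r\<^sup>2)) = h'*\<rho> + c/lam - h + p*(3/2 - c)"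
    using \<rho>0 unfolding \<rho>[symmetric] by (simp add: field_simps)
  finally have F: "h'*\<rho> + c/lam - h + p*(3/2 - c) \<le> \<rho> * (h' + (c/lam)/\<rho> - h/\<sigma> + p * Br)" .
  show ?thesis unfolding e1 by (rule F)
qed

lemma maxp:
  fixes u ut ux uxx :: "real \<Rightarrow> real \<Rightarrow> real" and b :: "real \<Rightarrow> real" and a Bb t1 x1 :: real
  assumes cont: "continuous_on ({0..} \<times> {0..}) (\<lambda>(t,x). u t x)"
  and bdd: "\<And>T. T > 0 \<Longrightarrow> \<exists>B. \<forall>t\<in>{0..T}. \<forall>x\<ge>0. u t x \<le> B"
  and init: "\<And>x. x \<ge> 0 \<Longrightarrow> u 0 x \<le> 0"
  and bdry: "\<And>t. t \<ge> 0 \<Longrightarrow> u t 0 \<le> 0"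
  and dt: "\<And>t x. t>0 \<Longrightarrow> x>0 \<Longrightarrow> ((\<lambda>s. u s x) has_real_derivative ut t x) (at t)"
  and dx: "\<And>t x. t>0 \<Longrightarrow> x>0 \<Longrightarrow> ((\<lambda>y. u t y) has_real_derivative ux t x) (at x)"
  and dxx: "\<And>t x. t>0 \<Longrightarrow> x>0 \<Longrightarrow> ((\<lambda>y. ux t y) has_real_derivative uxx t x) (at x)"
  and ineq: "\<And>t x. t>0 \<Longrightarrow> x>0 \<Longrightarrow> ut t x \<le> uxx t x + b t * ux t x + a * u t x"
  and bb: "\<And>t. t \<ge> 0 \<Longrightarrow> \<bar>b t\<bar> \<le> Bb"
  and t1: "t1 \<ge> 0" and x1: "x1 \<ge> 0"
  shows "u t1 x1 \<le> 0"
proof (rule ccontr)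
  assume "\<not> u t1 x1 \<le> 0"
  hence pos: "u t1 x1 > 0" by simp
  have t1p: "t1 > 0" using init[OF x1] pos t1 by (cases "t1 = 0") auto
  have x1p: "x1 > 0" using bdry[OF t1] pos x1 by (cases "x1 = 0") auto
  obtain B where B: "\<And>t x. t \<in> {0..t1} \<Longrightarrow> x \<ge> 0 \<Longrightarrow> u t x \<le> B" using bdd[OF t1p] by blast
  define Bb' where "Bb' = max Bb 0"
  have Bb'0: "Bb' \<ge> 0" unfolding Bb'_def by simp
  define M where "M = \<bar>a\<bar> + 2 + Bb'"
  have M0: "M \<ge> 0" and Ma: "M - a \<ge> 2 + Bb'" unfolding M_def using Bb'0 by auto
  define \<epsilon> where "\<epsilon> = exp(-M*t1) * u t1 x1 / (2*(1+x1\<^sup>2))"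
  have \<epsilon>0: "\<epsilon> > 0" unfolding \<epsilon>_def using pos by (simp add: add_pos_nonneg)
  define R where "R = \<bar>B\<bar>/\<epsilon> + x1 + 1"
  have "\<bar>B\<bar>/\<epsilon> \<ge> 0" using \<epsilon>0 by simp
  hence Rx1: "R > x1" unfolding R_def by simp
  define z where "z = (\<lambda>p. exp(-M * fst p) * u (fst p) (snd p) - \<epsilon>*(1+(snd p)\<^sup>2))"
  define K where "K = {0..t1} \<times> {0..R}"
  have Kc: "compact K" unfolding K_def by (intro compact_Times compact_Icc)
  have Kne: "K \<noteq> {}" unfolding K_def using t1 Rx1 x1 by auto
  have KS: "K \<subseteq> {0..} \<times> {0..}" unfolding K_def by auto
  have cu: "continuous_on K (\<lambda>p. u (fst p) (snd p))"
    using continuous_on_subset[OF cont KS] by (simp add: case_prod_beta')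
  have zc: "continuous_on K z" unfolding z_def
    by (intro continuous_intros cu)
  obtain p where pK: "p \<in> K" and pmax: "\<And>q. q \<in> K \<Longrightarrow> z q \<le> z p"
    using continuous_attains_sup[OF Kc Kne zc] by blast
  obtain ts xs where p: "p = (ts, xs)" by (cases p)
  have ts: "0 \<le> ts" "ts \<le> t1" and xs: "0 \<le> xs" "xs \<le> R" using pK p K_def by auto
  have x1q: "1+x1\<^sup>2 > 0" by (simp add: add_pos_nonneg)
  have "\<epsilon>*(1+x1\<^sup>2) = exp(-M*t1) * u t1 x1 / 2" unfolding \<epsilon>_def using x1q by (simp add: field_simps)
  hence "z (t1,x1) = \<epsilon>*(1+x1\<^sup>2)"
    unfolding z_def by simp
  moreover have "(t1,x1) \<in> K" unfolding K_def using t1 x1 Rx1 by auto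
  ultimately have zp: "z (ts,xs) \<ge> \<epsilon>*(1+x1\<^sup>2)" using pmax p by metis
  moreover have "\<epsilon>*(1+x1\<^sup>2) > 0" using \<epsilon>0 x1q by simp
  ultimately have zpos: "z (ts,xs) > 0" by linarith
  have tsp: "ts > 0"
  proof (rule ccontr)
    assume "\<not> ts > 0" hence "ts = 0" using ts by simp
    hence "z (ts,xs) \<le> - \<epsilon>*(1+xs\<^sup>2)" unfolding z_def using init[OF xs(1)] by simp
    moreover have "\<epsilon>*(1+xs\<^sup>2) > 0" using \<epsilon>0 by (simp add: add_pos_nonneg)
    ultimately show False using zpos by linarith
  qed
  have xsp: "xs > 0"
  proof (rule ccontr)
    assume "\<not> xs > 0" hence "xs = 0" using xs by simp
    hence "z (ts,xs) \<le> - \<epsilon>" unfolding z_def using bdry[OF ts(1)] by (simp add: mult_nonneg_nonpos)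
    thus False using zpos \<epsilon>0 by simp
  qed
  have xsR: "xs < R"
  proof (rule ccontr)
    assume "\<not> xs < R" hence xR: "xs = R" using xs by simp
    have "exp(-M*ts) * u ts xs \<le> exp(-M*ts) * \<bar>B\<bar>"
      using B[of ts xs] ts xs by (intro mult_left_mono) auto
    also have "\<dots> \<le> \<bar>B\<bar>" using M0 ts by (intro mult_left_le_one_le) auto
    finally have A: "exp(-M*ts) * u ts xs \<le> \<bar>B\<bar>" .
    have "(R - 1)*(R-1) \<ge> 0" by simp
    moreover have "(R-1)*(R-1) = R\<^sup>2 - 2*R + 1" by (simp add: algebra_simps power2_eq_square)
    ultimately have "1 + R\<^sup>2 \<ge> R" using Rx1 x1 by linarith
    hence ER: "\<epsilon> * (1 + R\<^sup>2) \<ge> \<epsilon> * R"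
      using \<epsilon>0 by (intro mult_left_mono) auto
    have "\<epsilon> * R = \<bar>B\<bar> + \<epsilon>*x1 + \<epsilon>" unfolding R_def using \<epsilon>0 by (simp add: field_simps)
    moreover have "\<epsilon>*x1 \<ge> 0" using \<epsilon>0 x1 by simp
    ultimately have "\<epsilon> * R > \<bar>B\<bar>" using \<epsilon>0 by linarith
    with ER have "z (ts,xs) < 0" unfolding z_def using A xR by simp
    thus False using zpos by simp
  qed
  define E where "E = exp(-M*ts)"
  have E0: "E > 0" unfolding E_def by simp
  have dzx: "((\<lambda>y. z (ts,y)) has_real_derivative (E * ux ts y - \<epsilon>*(2*y))) (at y)" if "y > 0" for y
    unfolding z_def E_def using dx[OF tsp that]
    by (auto intro!: derivative_eq_intros)
  have dzxx: "((\<lambda>y. E * ux ts y - \<epsilon>*(2*y)) has_real_derivative (E * uxx ts xs - \<epsilon>*2)) (at xs)"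
    using dxx[OF tsp xsp] by (auto intro!: derivative_eq_intros)
  have dzt: "((\<lambda>s. z (s,xs)) has_real_derivative (E * ut ts xs - M * E * u ts xs)) (at ts)"
    unfolding z_def E_def using dt[OF tsp xsp]
    by (auto intro!: derivative_eq_intros simp: algebra_simps)
  define d where "d = min xs (R - xs)"
  have d0: "d > 0" unfolding d_def using xsp xsR by simp
  have zx0: "E * ux ts xs - \<epsilon>*(2*xs) = 0"
  proof (rule DERIV_local_max[OF dzx[OF xsp] d0], intro allI impI)
    fix y assume "\<bar>xs - y\<bar> < d"
    hence "(ts,y) \<in> K" unfolding K_def d_def using ts by auto
    thus "z (ts,y) \<le> z (ts,xs)" using pmax p by metis
  qed
  have zxx: "E * uxx ts xs - \<epsilon>*2 \<le> 0"
  proof (rule ccontr)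
    assume "\<not> ?thesis"
    then obtain d' where d': "d' > 0" and inc: "\<And>h. h>0 \<Longrightarrow> h < d' \<Longrightarrow> 0 < E * ux ts (xs+h) - \<epsilon>*(2*(xs+h))"
      using DERIV_pos_inc_right[OF dzxx] zx0 by auto
    define mm where "mm = min d' (R - xs)"
    define h where "h = mm / 2"
    have m1: "mm \<le> R - xs" "mm \<le> d'" "mm > 0" using d' xsR unfolding mm_def by auto
    have h1: "h > 0" unfolding h_def using m1(3) by linarith
    have h2: "h < d'" unfolding h_def using m1(2) d' by linarith
    have h3: "xs + h \<le> R" unfolding h_def using m1(1) xsR by linarith
    note h = h1 h2 h3
    obtain \<xi> where \<xi>: "xs < \<xi>" "\<xi> < xs + h" and eq: "z (ts, xs+h) - z (ts,xs) = h * (E * ux ts \<xi> - \<epsilon>*(2*\<xi>))"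
      using MVT2[of xs "xs+h" "\<lambda>y. z (ts,y)" "\<lambda>y. E * ux ts y - \<epsilon>*(2*y)"] h dzx xsp by auto
    have "0 < E * ux ts \<xi> - \<epsilon>*(2*\<xi>)" using inc[of "\<xi> - xs"] \<xi> h by simp
    hence "h * (E * ux ts \<xi> - \<epsilon>*(2*\<xi>)) > 0" using h by simp
    hence "z (ts, xs+h) > z (ts,xs)" using eq by linarith
    moreover have "(ts, xs+h) \<in> K" unfolding K_def using ts xs h by auto
    ultimately show False using pmax p by fastforce
  qed
  have zt: "E * ut ts xs - M * E * u ts xs \<ge> 0"
  proof (rule ccontr)
    assume "\<not> ?thesis"
    then obtain d' where d': "d' > 0" and dec: "\<And>h. h>0 \<Longrightarrow> h < d' \<Longrightarrow> z (ts,xs) < z (ts - h, xs)"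
      using DERIV_neg_dec_left[OF dzt] by auto
    define h where "h = min d' ts / 2"
    have h: "h > 0" "h < d'" "h \<le> ts" unfolding h_def using d' tsp by auto
    have "(ts - h, xs) \<in> K" unfolding K_def using ts xs h by auto
    thus False using pmax p dec[OF h(1,2)] by fastforce
  qed
  define U where "U = E * u ts xs"
  have U: "U > \<epsilon> * (1 + xs\<^sup>2)" using zpos unfolding U_def z_def E_def by simp
  have I: "E * ut ts xs \<le> E * uxx ts xs + b ts * (E * ux ts xs) + a * U"
    using mult_left_mono[OF ineq[OF tsp xsp], of E] E0 unfolding U_def by (simp add: algebra_simps)
  have "M * U \<le> \<epsilon>*2 + b ts * (\<epsilon>*(2*xs)) + a * U"
  proof -
    have e1: "E * ux ts xs = \<epsilon>*(2*xs)" using zx0 by simp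
    have "M * U \<le> E * ut ts xs" using zt unfolding U_def by (simp add: algebra_simps)
    thus ?thesis using I[unfolded e1] zxx by linarith
  qed
  hence "(M - a) * U \<le> 2*\<epsilon> + b ts * (2*\<epsilon>*xs)" by (simp add: algebra_simps)
  also have "\<dots> \<le> 2*\<epsilon> + Bb' * (2*\<epsilon>*xs)"
  proof -
    have "b ts \<le> Bb'" using bb[OF ts(1)] unfolding Bb'_def by simp
    thus ?thesis using \<epsilon>0 xsp by (simp add: mult_right_mono)
  qed
  finally have L: "(M - a) * U \<le> 2*\<epsilon> + Bb' * (2*\<epsilon>*xs)" .
  have "(M - a) * U > (M - a) * (\<epsilon> * (1 + xs\<^sup>2))"
    using U Ma Bb'0 by (intro mult_strict_left_mono) auto
  moreover have "(M - a) * (\<epsilon> * (1 + xs\<^sup>2)) \<ge> (2 + Bb') * (\<epsilon> * (1 + xs\<^sup>2))"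
    using Ma \<epsilon>0 by (intro mult_right_mono) (auto intro: add_nonneg_nonneg)
  moreover have "(2 + Bb') * (\<epsilon> * (1 + xs\<^sup>2)) - (2*\<epsilon> + Bb' * (2*\<epsilon>*xs)) = \<epsilon> * (2*xs\<^sup>2 + Bb' * (1 - xs)\<^sup>2)"
    by (simp add: algebra_simps power2_eq_square)
  moreover have "\<epsilon> * (2*xs\<^sup>2 + Bb' * (1 - xs)\<^sup>2) \<ge> 0" using \<epsilon>0 Bb'0 by simp
  ultimately show False using L by linarith
qed

lemma sq_exp: assumes "(\<eta>::real) \<ge> 0" shows "\<eta>\<^sup>2 \<le> 8 * exp(\<eta>/2)"
proof -
  have "1 + \<eta>/2 + (\<eta>/2)\<^sup>2/2 \<le> exp(\<eta>/2)" using exp_lower_Taylor_quadratic[of "\<eta>/2"] assms by simp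
  moreover have "(\<eta>/2)\<^sup>2/2 = \<eta>\<^sup>2/8" by (simp add: power2_eq_square)
  ultimately show ?thesis using assms by simp
qed

lemma tail_bound: assumes "(\<eta>::real) \<ge> 0" "B \<ge> 0"
  shows "(2*\<eta>\<^sup>2 + B) * exp(-\<eta>\<^sup>2/12) \<le> exp 3 * (16 + B) * exp(-\<eta>/2)"
proof -
  have "(\<eta> - 6)\<^sup>2 \<ge> 0" by simp
  hence "-\<eta>\<^sup>2/12 \<le> 3 + (-\<eta>)" by (simp add: power2_eq_square algebra_simps)
  hence e1: "exp(-\<eta>\<^sup>2/12) \<le> exp 3 * exp(-\<eta>)" by (simp add: exp_add[symmetric])
  have e2: "exp(-\<eta>) = exp(-\<eta>/2) * exp(-\<eta>/2)" by (simp add: exp_add[symmetric])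
  have e3: "\<eta>\<^sup>2 * exp(-\<eta>/2) \<le> 8"
  proof -
    have "\<eta>\<^sup>2 * exp(-\<eta>/2) \<le> 8 * exp(\<eta>/2) * exp(-\<eta>/2)" using sq_exp[OF assms(1)] by (intro mult_right_mono) auto
    also have "\<dots> = 8" by (simp add: mult.assoc exp_add[symmetric])
    finally show ?thesis .
  qed
  have e4: "exp(-\<eta>/2) \<le> 1" using assms by simp
  have "(2*\<eta>\<^sup>2 + B) * exp(-\<eta>\<^sup>2/12) \<le> (2*\<eta>\<^sup>2 + B) * (exp 3 * exp(-\<eta>))"
    using e1 assms by (intro mult_left_mono) auto
  also have "\<dots> = exp 3 * (2 * (\<eta>\<^sup>2 * exp(-\<eta>/2)) + B * exp(-\<eta>/2)) * exp(-\<eta>/2)"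
    unfolding e2 by (simp add: algebra_simps)
  also have "\<dots> \<le> exp 3 * (16 + B) * exp(-\<eta>/2)"
  proof -
    have "2 * (\<eta>\<^sup>2 * exp(-\<eta>/2)) + B * exp(-\<eta>/2) \<le> 16 + B"
      using e3 e4 assms mult_left_mono[OF e4, of B] by linarith
    thus ?thesis by (intro mult_right_mono mult_left_mono) auto
  qed
  finally show ?thesis .
qed

lemma ln4: assumes "(s::real) \<ge> 1" shows "(ln s)^4 \<le> 256 * s"
proof -
  have l: "ln s \<le> (s powr (1/4)) / (1/4)" by (rule ln_powr_bound[OF assms]) simp
  have l0: "ln s \<ge> 0" using assms by simp
  have "(ln s)^4 \<le> ((s powr (1/4)) / (1/4))^4" using l l0 by (intro power_mono) auto
  also have "\<dots> = 256 * (s powr (1/4))^4" by (simp add: power_divide)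
  also have "(s powr (1/4))^4 = s"
  proof -
    have p: "s powr (1/4) > 0" using assms by simp
    have "(s powr (1/4))^4 = (s powr (1/4)) powr (real 4)" using powr_realpow[OF p, of 4] by simp
    also have "\<dots> = s" by (simp add: powr_powr) (use assms in simp)
    finally show ?thesis .
  qed
  finally show ?thesis by simp
qed

lemma exp_half_integrable: "(\<lambda>\<eta>::real. C * exp(-\<eta>/2)) integrable_on {0<..}"
proof -
  have "(\<lambda>\<eta>::real. exp(-(1/2)*\<eta>)) integrable_on {0..}" by (rule integrable_on_exp_minus_to_infinity) simp
  from integrable_cmul[OF this, of C] have "(\<lambda>\<eta>::real. C * exp(-(1/2)*\<eta>)) integrable_on {0..}" by simp
  hence i: "(\<lambda>\<eta>::real. C * exp(-\<eta>/2)) integrable_on {0..}" by simp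
  show ?thesis
    apply (rule integrable_spike_set[OF i])
     apply (rule negligible_subset[of "{0}"], simp, force)
    apply (rule negligible_subset[of "{}"], simp, force)
    done
qed

locale kpp =
  fixes a t0 \<alpha> :: real and k :: nat
  assumes a: "a > 0" and t0: "t0 \<ge> 16" and \<alpha>: "\<alpha> > 0" and k: "k \<ge> 2"
begin

definition "lam = sqrt a"
definition "\<rho> t = t + t0"
definition "\<sigma>f t = \<rho> t + 2 * sqrt (\<rho> t)"
definition "Kc = (real k)\<^sup>2 / (4*a) + 3"
definition "gf t = exp (- 2 * Kc / sqrt (\<rho> t))"
definition "\<beta> = (real k + 1) / (2 * lam)"
definition "hf j t = (if j < k then \<beta> * (ln (\<rho> t))\<^sup>2 else 0)"
definition "hdf j t = (if j < k then \<beta> * (2 * ln (\<rho> t)) / \<rho> t else 0)"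
definition "SVf A j t x = A * gf t * (x + hf j t) * exp (- lam * x) * exp (- x\<^sup>2 / (4 * \<sigma>f t))"

lemma lam_pos: "lam > 0" unfolding lam_def using a by simp
lemma lam_sq: "lam\<^sup>2 = a" unfolding lam_def using a by simp

lemma rho_ge: "t \<ge> 0 \<Longrightarrow> \<rho> t \<ge> 16" unfolding \<rho>_def using t0 by simp

lemma ln_rho_ge: assumes "t \<ge> 0" shows "ln (\<rho> t) \<ge> 1"
proof -
  have "exp 1 \<le> \<rho> t" using exp_le rho_ge[OF assms] by linarith
  moreover have "\<rho> t > 0" using rho_ge[OF assms] by linarith
  ultimately show ?thesis by (simp add: ln_ge_iff)
qed

lemma sqrt_rho: "t \<ge> 0 \<Longrightarrow> sqrt (\<rho> t) \<ge> 4"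
  using rho_ge[of t] real_sqrt_le_mono[of 16 "\<rho> t"] by simp

lemma sigma_pos: "t \<ge> 0 \<Longrightarrow> \<sigma>f t > 0" unfolding \<sigma>f_def using rho_ge[of t] sqrt_rho[of t] by simp

lemma Kc_pos: "Kc > 0" unfolding Kc_def using a by (simp add: add_nonneg_pos)

lemma gf_pos: "gf t > 0" unfolding gf_def by simp
lemma gf_le1: assumes "t \<ge> 0" shows "gf t \<le> 1"
proof -
  have "2 * Kc / sqrt (\<rho> t) \<ge> 0" using Kc_pos sqrt_rho[OF assms] rho_ge[OF assms] by (intro divide_nonneg_nonneg) auto
  thus ?thesis unfolding gf_def by simp
qed

lemma hf_nonneg: "hf j t \<ge> 0"
  unfolding hf_def \<beta>_def using lam_pos by simp

lemma d_rho: "(\<rho> has_real_derivative 1) (at t)"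
  unfolding \<rho>_def[abs_def] by (auto intro!: derivative_eq_intros)

lemma d_gf: assumes "t \<ge> 0" shows "(gf has_real_derivative gf t * (Kc / (\<rho> t * sqrt (\<rho> t)))) (at t)"
proof -
  have r: "\<rho> t > 0" using rho_ge[OF assms] by simp
  show ?thesis unfolding gf_def[abs_def]
    using r by (auto intro!: derivative_eq_intros d_rho simp: divide_simps)
qed

lemma d_sig: assumes "t \<ge> 0" shows "(\<sigma>f has_real_derivative 1 + 1 / sqrt (\<rho> t)) (at t)"
proof -
  have r: "\<rho> t > 0" using rho_ge[OF assms] by simp
  show ?thesis unfolding \<sigma>f_def[abs_def]
    using r by (auto intro!: derivative_eq_intros d_rho simp: divide_simps)
qed

lemma d_hf: assumes "t \<ge> 0" shows "(hf j has_real_derivative hdf j t) (at t)"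
proof -
  have r: "\<rho> t > 0" using rho_ge[OF assms] by simp
  show ?thesis
  proof (cases "j < k")
    case True
    show ?thesis unfolding hf_def[abs_def] hdf_def
      using r True by (auto intro!: derivative_eq_intros d_rho simp: divide_simps)
  next
    case False
    show ?thesis unfolding hf_def[abs_def] hdf_def
      using False by simp
  qed
qed

definition "Stf A j t x = A*exp(-lam*x)*exp(-x\<^sup>2/(4*\<sigma>f t))*(gf t * (Kc / (\<rho> t * sqrt (\<rho> t)))*(x + hf j t) + gf t*hdf j t + gf t*(x+hf j t)*(1 + 1 / sqrt (\<rho> t))*x\<^sup>2/(4*(\<sigma>f t)\<^sup>2))"
definition "Sxf A j t x = A*gf t*exp(-lam*x)*exp(-x\<^sup>2/(4*\<sigma>f t))*(1 + (x+hf j t)*(-lam - x/(2*\<sigma>f t)))"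
definition "Sxxf A j t x = A*gf t*exp(-lam*x)*exp(-x\<^sup>2/(4*\<sigma>f t))*(2*(-lam - x/(2*\<sigma>f t)) + (x+hf j t)*((lam + x/(2*\<sigma>f t))\<^sup>2 - 1/(2*\<sigma>f t)))"

lemma SV_dt: assumes "t \<ge> 0" shows "((\<lambda>s. SVf A j s x) has_real_derivative Stf A j t x) (at t)"
  unfolding SVf_def Stf_def
  by (rule S_dt[OF d_gf[OF assms] d_hf[OF assms] d_sig[OF assms]]) (use sigma_pos[OF assms] in simp)

lemma SV_dx: assumes "t \<ge> 0" shows "((\<lambda>y. SVf A j t y) has_real_derivative Sxf A j t x) (at x)"
  unfolding SVf_def Sxf_def
  by (rule S_dx) (use sigma_pos[OF assms] in simp)

lemma SV_dxx: assumes "t \<ge> 0" shows "((\<lambda>y. Sxf A j t y) has_real_derivative Sxxf A j t x) (at x)"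
  unfolding Sxxf_def Sxf_def
  by (rule S_dxx) (use sigma_pos[OF assms] in simp)

lemma SV_nonneg: assumes "t \<ge> 0" "x \<ge> 0" "A \<ge> 0" shows "SVf A j t x \<ge> 0"
  unfolding SVf_def using assms gf_pos[of t] hf_nonneg[of j t] by simp

lemma coeff_bound: assumes "j \<ge> 1" "j \<le> k" shows "\<bar>L_rhs_coeff k j\<bar> \<le> k" "L_rhs_coeff k j \<le> 3/2"
  "j < k \<Longrightarrow> L_rhs_coeff k j \<le> 1/2" "j + 1 < k \<Longrightarrow> L_rhs_coeff k j \<le> -1/2"
  using assms k by (auto simp: L_rhs_coeff_def)

lemma Kc_ge: assumes "j \<ge> 1" "j \<le> k" shows "Kc \<ge> (L_rhs_coeff k j / lam)\<^sup>2/4 + 3"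
proof -
  have "(L_rhs_coeff k j)\<^sup>2 \<le> (real k)\<^sup>2"
    using coeff_bound(1)[OF assms] by (metis abs_le_square_iff abs_of_nat)
  hence "(L_rhs_coeff k j)\<^sup>2 / a \<le> (real k)\<^sup>2 / a" using a by (simp add: divide_right_mono)
  moreover have "(L_rhs_coeff k j / lam)\<^sup>2 = (L_rhs_coeff k j)\<^sup>2 / a"
    using lam_sq by (simp add: power_divide)
  ultimately show ?thesis unfolding Kc_def by simp
qed

lemma Op:
  assumes t: "t \<ge> 0" and x: "x \<ge> 0" and j: "1 \<le> j" "j \<le> k"
    and A: "A \<ge> 0" "A' \<ge> 0" "\<alpha> * A' \<le> A"
  shows "Stf A j t x - 2*lam*Sxf A j t x + L_rhs_coeff k j/(lam*\<rho> t)*Sxf A j t x - Sxxf A j t x - a*SVf A j t x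
     \<ge> (if j < k then \<alpha> * SVf A' (j+1) t (x + ln (\<rho> t)/lam) else 0)"
proof -
  define c where "c = L_rhs_coeff k j"
  define r where "r = sqrt (\<rho> t)"
  define G where "G = gf t"
  define X where "X = exp(-lam*x)"
  define Eg where "Eg = exp(-x\<^sup>2/(4*\<sigma>f t))"
  define h where "h = hf j t"
  define h' where "h' = hdf j t"
  define \<sigma> where "\<sigma> = \<sigma>f t"
  define \<rho>' where "\<rho>' = \<rho> t"
  define p where "p = x + h"
  have r0: "r > 0" unfolding r_def using rho_ge[OF t] by simp
  have \<rho>r: "\<rho>' = r\<^sup>2" unfolding r_def \<rho>'_def using rho_ge[OF t] by simp
  have \<rho>0: "\<rho>' > 0" using rho_ge[OF t] unfolding \<rho>'_def by simp
  have \<sigma>r: "\<sigma> = r\<^sup>2 + 2*r" unfolding \<sigma>_def \<sigma>f_def using \<rho>r unfolding \<rho>'_def r_def by simp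
  have \<sigma>0: "\<sigma> > 0" unfolding \<sigma>_def using sigma_pos[OF t] .
  have G0: "G > 0" unfolding G_def using gf_pos .
  have h0: "h \<ge> 0" unfolding h_def using hf_nonneg .
  have p0: "p \<ge> 0" unfolding p_def using x h0 by simp
  have X0: "X > 0" and Eg0: "Eg > 0" unfolding X_def Eg_def by simp_all
  have lam0: "lam \<noteq> 0" using lam_pos by simp
  have so: "A*X*Eg*(G * (Kc / (\<rho>' * r))*(x + h) + G*h' + G*(x+h)*(1 + 1/r)*x\<^sup>2/(4*\<sigma>\<^sup>2))
     - 2*lam*(A*G*X*Eg*(1 + (x+h)*(-lam - x/(2*\<sigma>))))
     + c/(lam * \<rho>') * (A*G*X*Eg*(1 + (x+h)*(-lam - x/(2*\<sigma>))))
     - A*G*X*Eg*(2*(-lam - x/(2*\<sigma>)) + (x+h)*((lam + x/(2*\<sigma>))\<^sup>2 - 1/(2*\<sigma>)))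
     - lam\<^sup>2 * (A*G*(x+h)*X*Eg)
   = A*X*Eg*(G * (Kc / (\<rho>' * r))*(x+h) + G*(h' + (c/lam)/\<rho>' - h/\<sigma> + (x+h)*(((1 + 1/r)-1)*x\<^sup>2/(4*\<sigma>\<^sup>2) - (c/lam)*x/(2 * \<rho>'*\<sigma>) + 3/(2*\<sigma>) - c/\<rho>')))"
    by (rule S_op) (use lam0 \<rho>0 \<sigma>0 in auto)
  define Q where "Q = Kc*p/(\<rho>'*r) + (h' + (c/lam)/\<rho>' - h/\<sigma> + p*(((1 + 1/r)-1)*x\<^sup>2/(4*\<sigma>\<^sup>2) - (c/lam)*x/(2*\<rho>'*\<sigma>) + 3/(2*\<sigma>) - c/\<rho>'))"
  have LHS: "Stf A j t x - 2*lam*Sxf A j t x + L_rhs_coeff k j/(lam*\<rho> t)*Sxf A j t x - Sxxf A j t x - a*SVf A j t x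
      = A*X*Eg*G*Q"
  proof -
    have "Stf A j t x - 2*lam*Sxf A j t x + L_rhs_coeff k j/(lam*\<rho> t)*Sxf A j t x - Sxxf A j t x - a*SVf A j t x
      = A*X*Eg*(G * (Kc / (\<rho>' * r))*(x+h) + G*(h' + (c/lam)/\<rho>' - h/\<sigma> + (x+h)*(((1 + 1/r)-1)*x\<^sup>2/(4*\<sigma>\<^sup>2) - (c/lam)*x/(2 * \<rho>'*\<sigma>) + 3/(2*\<sigma>) - c/\<rho>')))"
      unfolding so[symmetric] unfolding Stf_def Sxf_def Sxxf_def SVf_def c_def r_def G_def X_def Eg_def h_def h'_def \<sigma>_def \<rho>'_def lam_sq
      by (simp add: algebra_simps)
    also have "\<dots> = A*X*Eg*G*Q" unfolding Q_def p_def by (simp add: algebra_simps)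
    finally show ?thesis .
  qed
  have Z: "\<rho>' * Q \<ge> h'*\<rho>' + c/lam - h + p*(3/2 - c)"
    unfolding Q_def by (rule z_bound[OF r0 \<rho>r \<sigma>r refl p0 h0]) (use Kc_ge[OF j] in \<open>simp add: c_def\<close>)
  define W where "W = h'*\<rho>' + c/lam - h + p*(3/2 - c)"
  have QW: "Q \<ge> W/\<rho>'" using Z \<rho>0 unfolding W_def by (simp add: divide_le_eq mult.commute)
  have AXEG: "A*X*Eg*G \<ge> 0" using A X0 Eg0 G0 by simp
  have LW: "A*X*Eg*G*Q \<ge> A*X*Eg*G*(W/\<rho>')" using mult_left_mono[OF QW AXEG] .
  show ?thesis
  proof (cases "j < k")
    case False
    hence jk: "j = k" using j by simp
    have "W = 3/(2*lam)" unfolding W_def h'_def h_def p_def c_def hdf_def hf_def L_rhs_coeff_def using jk by simp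
    hence "W \<ge> 0" using lam_pos by simp
    hence "A*X*Eg*G*(W/\<rho>') \<ge> 0" using AXEG \<rho>0 by simp
    thus ?thesis using LHS LW False by simp
  next
    case True
    define L where "L = ln \<rho>'"
    have L1: "L \<ge> 1" unfolding L_def \<rho>'_def using ln_rho_ge[OF t] .
    define T where "T = x + L/lam + hf (j+1) t"
    have hL: "h = \<beta> * L\<^sup>2" "h' * \<rho>' = \<beta> * (2*L)" unfolding h_def h'_def hf_def hdf_def L_def \<rho>'_def
      using True \<rho>0 unfolding \<rho>'_def by auto
    have cb: "c \<le> 1/2" "c \<ge> - real k" using coeff_bound[OF j] True unfolding c_def by auto
    have \<beta>e: "\<beta> * (2*L) = (real k + 1) * L / lam" unfolding \<beta>_def using lam0 by (simp add: field_simps)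
    have \<beta>0: "\<beta> \<ge> 0" unfolding \<beta>_def using lam_pos by simp
    have W1: "(real k + 1) * L / lam + c/lam - L/lam \<ge> 0"
    proof -
      have "(real k + 1) * L / lam + c/lam - L/lam = (real k * L + c)/lam" using lam0 by (simp add: field_simps)
      moreover have "real k * L \<ge> real k * 1" using L1 by (intro mult_left_mono) auto
      ultimately show ?thesis using cb lam_pos by simp
    qed
    have W2: "x * (3/2 - c) \<ge> x" using x cb by (simp add: mult_left_mono[of 1 "3/2 - c" x, simplified])
    have W3: "\<beta> * L\<^sup>2 * (1/2 - c) \<ge> hf (j+1) t"
    proof (cases "j + 1 < k")
      case True
      hence "c \<le> -1/2" using coeff_bound(4)[OF j] unfolding c_def by simp
      hence "\<beta> * L\<^sup>2 * (1/2 - c) \<ge> \<beta> * L\<^sup>2 * 1" using \<beta>0 by (intro mult_left_mono) auto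
      thus ?thesis unfolding hf_def L_def \<rho>'_def using True by simp
    next
      case False
      thus ?thesis unfolding hf_def using \<beta>0 cb by simp
    qed
    have WT: "W \<ge> T"
    proof -
      have "W = \<beta> * (2*L) + c/lam + x*(3/2 - c) + \<beta> * L\<^sup>2 * (1/2 - c)"
        unfolding W_def p_def using hL by (simp add: algebra_simps)
      thus ?thesis unfolding T_def using \<beta>e W1 W2 W3 by linarith
    qed
    have T0: "T \<ge> 0" unfolding T_def using x L1 lam_pos hf_nonneg[of "j+1" t] by simp
    have m0: "L/lam \<ge> 0" using L1 lam_pos by simp
    have ex1: "exp(-lam*(x + L/lam)) = X/\<rho>'"
    proof -
      have "-lam*(x + L/lam) = -lam*x + (- L)" using lam0 by (simp add: field_simps)
      hence "exp(-lam*(x + L/lam)) = X * exp(-L)" unfolding X_def by (simp add: exp_diff exp_minus field_simps)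
      also have "exp(-L) = 1/\<rho>'" unfolding L_def using \<rho>0 by (simp add: exp_minus inverse_eq_divide)
      finally show ?thesis by simp
    qed
    have ex2: "exp(-(x + L/lam)\<^sup>2/(4*\<sigma>)) \<le> Eg"
    proof -
      have "(x + L/lam)\<^sup>2 \<ge> x\<^sup>2" using x m0 by (simp add: power_mono)
      hence "(x + L/lam)\<^sup>2/(4*\<sigma>) \<ge> x\<^sup>2/(4*\<sigma>)" using \<sigma>0 by (simp add: divide_right_mono)
      thus ?thesis unfolding Eg_def \<sigma>_def by simp
    qed
    have RHS: "\<alpha> * SVf A' (j+1) t (x + ln (\<rho> t)/lam) \<le> \<alpha> * A' * G * T * X * Eg / \<rho>'"
    proof -
      have "\<alpha> * SVf A' (j+1) t (x + ln (\<rho> t)/lam) = \<alpha> * A' * G * T * exp(-lam*(x + L/lam)) * exp(-(x + L/lam)\<^sup>2/(4*\<sigma>))"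
        unfolding SVf_def T_def G_def L_def \<rho>'_def \<sigma>_def by (simp add: algebra_simps)
      also have "\<dots> = (\<alpha> * A' * G * T * X/\<rho>') * exp(-(x + L/lam)\<^sup>2/(4*\<sigma>))" unfolding ex1 by simp
      also have "\<dots> \<le> (\<alpha> * A' * G * T * X/\<rho>') * Eg"
        using \<alpha> A G0 T0 X0 \<rho>0 ex2 by (intro mult_left_mono) auto
      finally show ?thesis by simp
    qed
    have "\<alpha> * A' * T \<le> A * W" using A \<alpha> T0 WT by (intro mult_mono) auto
    hence "\<alpha> * A' * T * (G * X * Eg / \<rho>') \<le> A * W * (G * X * Eg / \<rho>')"
      using G0 X0 Eg0 \<rho>0 by (intro mult_right_mono) auto
    hence "\<alpha> * A' * G * T * X * Eg / \<rho>' \<le> A*X*Eg*G*(W/\<rho>')" by (simp add: algebra_simps)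
    thus ?thesis using LHS LW RHS True by simp
  qed
qed


end

context kpp begin

lemma SV_cont: "continuous_on ({0..} \<times> {0..}) (\<lambda>(t,x). SVf A j t x)"
proof -
  have r: "\<And>p. p \<in> ({0..} \<times> {0..}) \<Longrightarrow> \<rho> (fst p) > 0" using rho_ge by fastforce
  have s: "\<And>p. p \<in> ({0..} \<times> {0..}) \<Longrightarrow> \<sigma>f (fst p) > 0" using sigma_pos by fastforce
  have sq: "\<And>p. p \<in> ({0..} \<times> {0..}) \<Longrightarrow> sqrt (\<rho> (fst p)) > 0" using r by simp
  have cr: "continuous_on ({0..} \<times> {0..}) (\<lambda>p. \<rho> (fst p))" unfolding \<rho>_def by (intro continuous_intros)
  have cg: "continuous_on ({0..} \<times> {0..}) (\<lambda>p. gf (fst p))" unfolding gf_def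
    using sq by (intro continuous_intros cr) fastforce
  have ch: "continuous_on ({0..} \<times> {0..}) (\<lambda>p. hf j (fst p))"
  proof (cases "j < k")
    case True
    have "continuous_on ({0..} \<times> {0..}) (\<lambda>p. \<beta> * (ln (\<rho> (fst p)))\<^sup>2)"
      using r by (intro continuous_intros cr) fastforce
    thus ?thesis unfolding hf_def using True by simp
  next
    case False
    thus ?thesis unfolding hf_def by simp
  qed
  have cs: "continuous_on ({0..} \<times> {0..}) (\<lambda>p. \<sigma>f (fst p))" unfolding \<sigma>f_def
    by (intro continuous_intros cr)
  have "continuous_on ({0..} \<times> {0..}) (\<lambda>p. SVf A j (fst p) (snd p))" unfolding SVf_def
    using s by (intro continuous_intros cg ch cs) fastforce
  thus ?thesis by (simp add: case_prod_beta')
qed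

lemma step:
  fixes V0 :: "nat \<Rightarrow> real \<Rightarrow> real" and V :: "nat \<Rightarrow> real \<Rightarrow> real \<Rightarrow> real"
  assumes sol: "is_sol_L a k \<alpha> t0 V0 V" and j: "1 \<le> j" "j \<le> k"
    and A: "A \<ge> 0" "A' \<ge> 0" "\<alpha> * A' \<le> A"
    and init: "\<And>x. x \<ge> 0 \<Longrightarrow> \<bar>V0 j x\<bar> \<le> SVf A j 0 x"
    and IH: "j < k \<Longrightarrow> \<forall>t\<ge>0. \<forall>x\<ge>0. \<bar>V (j+1) t x\<bar> \<le> SVf A' (j+1) t x"
    and e: "e = 1 \<or> e = (-1::real)"
    and tx: "t1 \<ge> 0" "x1 \<ge> 0"
  shows "e * V j t1 x1 \<le> SVf A j t1 x1"
proof -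
  have jk: "j \<in> {1..k}" using j by simp
  note S = sol[unfolded is_sol_L_def, rule_format, OF jk]
  note Sc = S[THEN conjunct1]
  note Sb = S[THEN conjunct2, THEN conjunct1]
  note S0 = S[THEN conjunct2, THEN conjunct2, THEN conjunct1]
  note Si = S[THEN conjunct2, THEN conjunct2, THEN conjunct2, THEN conjunct1]
  note Sd = S[THEN conjunct2, THEN conjunct2, THEN conjunct2, THEN conjunct2]
  obtain Vt Vx Vxx where D: "\<And>t x. t > 0 \<Longrightarrow> x > 0 \<Longrightarrow>
       ((\<lambda>s. V j s x) has_real_derivative Vt t x) (at t)
     \<and> ((\<lambda>y. V j t y) has_real_derivative Vx t x) (at x)
     \<and> ((\<lambda>y. Vx t y) has_real_derivative Vxx t x) (at x)
     \<and> Vt t x - 2 * sqrt a * Vx t x + L_rhs_coeff k j / (sqrt a * (t + t0)) * Vx t x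
        = Vxx t x + a * V j t x + (if j < k then \<alpha> * V (j+1) t (x + ln (t + t0) / sqrt a) else 0)"
    using Sd by blast
  have e1: "\<bar>e\<bar> = 1" using e by auto
  define b where "b t = 2*lam - L_rhs_coeff k j/(lam*\<rho> t)" for t
  have "e * V j t1 x1 - SVf A j t1 x1 \<le> 0"
  proof (rule maxp[where u="\<lambda>t x. e * V j t x - SVf A j t x"
        and ut="\<lambda>t x. e * Vt t x - Stf A j t x" and ux="\<lambda>t x. e * Vx t x - Sxf A j t x"
        and uxx="\<lambda>t x. e * Vxx t x - Sxxf A j t x" and b=b and a=a and Bb="2*lam + real k/(lam*t0)"])
    show "continuous_on ({0..} \<times> {0..}) (\<lambda>(t,x). e * V j t x - SVf A j t x)"
    proof -
      have c1: "continuous_on ({0..} \<times> {0..}) (\<lambda>p. V j (fst p) (snd p))"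
        using Sc by (simp add: case_prod_beta')
      have c2: "continuous_on ({0..} \<times> {0..}) (\<lambda>p. SVf A j (fst p) (snd p))"
        using SV_cont by (simp add: case_prod_beta')
      have "continuous_on ({0..} \<times> {0..}) (\<lambda>p. e * V j (fst p) (snd p) - SVf A j (fst p) (snd p))"
        by (intro continuous_intros c1 c2)
      thus ?thesis by (simp add: case_prod_beta')
    qed
    show "\<exists>B. \<forall>t\<in>{0..T}. \<forall>x\<ge>0. e * V j t x - SVf A j t x \<le> B" if T: "T > 0" for T
    proof -
      obtain B where B: "\<forall>t\<in>{0..T}. \<forall>x\<ge>0. \<bar>V j t x\<bar> \<le> B" using Sb T by blast
      have "e * V j t x - SVf A j t x \<le> B" if "t \<in> {0..T}" "x \<ge> 0" for t x
      proof -
        have "e * V j t x \<le> \<bar>e * V j t x\<bar>" by simp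
        also have "\<dots> = \<bar>V j t x\<bar>" using e1 by (simp add: abs_mult)
        finally have 1: "e * V j t x \<le> \<bar>V j t x\<bar>" .
        have 2: "\<bar>V j t x\<bar> \<le> B" using B that by blast
        have 3: "SVf A j t x \<ge> 0" using that A by (intro SV_nonneg) auto
        show ?thesis using 1 2 3 by linarith
      qed
      thus ?thesis by blast
    qed
    show "e * V j 0 x - SVf A j 0 x \<le> 0" if "x \<ge> 0" for x
    proof -
      have "V j 0 x = V0 j x" using Si that by blast
      moreover have "e * V0 j x \<le> \<bar>V0 j x\<bar>" using e by auto
      ultimately show ?thesis using init[OF that] by simp
    qed
    show "e * V j t 0 - SVf A j t 0 \<le> 0" if "t \<ge> 0" for t
      using S0 that SV_nonneg[of t 0 A j] A by simp
    show "((\<lambda>s. e * V j s x - SVf A j s x) has_real_derivative e * Vt t x - Stf A j t x) (at t)"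
      if "t > 0" "x > 0" for t x
      using D[OF that] SV_dt[of t A j x] that by (auto intro!: derivative_eq_intros)
    show "((\<lambda>y. e * V j t y - SVf A j t y) has_real_derivative e * Vx t x - Sxf A j t x) (at x)"
      if "t > 0" "x > 0" for t x
      using D[OF that] SV_dx[of t A j x] that by (auto intro!: derivative_eq_intros)
    show "((\<lambda>y. e * Vx t y - Sxf A j t y) has_real_derivative e * Vxx t x - Sxxf A j t x) (at x)"
      if "t > 0" "x > 0" for t x
      using D[OF that] SV_dxx[of t A j x] that by (auto intro!: derivative_eq_intros)
    show "\<bar>b t\<bar> \<le> 2*lam + real k/(lam*t0)" if "t \<ge> 0" for t
    proof -
      have c: "\<bar>L_rhs_coeff k j\<bar> \<le> k" using coeff_bound(1)[OF j] .
      have lr: "lam * \<rho> t \<ge> lam * t0" using that lam_pos unfolding \<rho>_def by simp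
      have t00: "lam * t0 > 0" using lam_pos t0 by simp
      have "\<bar>L_rhs_coeff k j/(lam*\<rho> t)\<bar> = \<bar>L_rhs_coeff k j\<bar>/(lam*\<rho> t)" using lr t00 by simp
      also have "\<dots> \<le> real k/(lam*\<rho> t)" using c lr t00 by (intro divide_right_mono) auto
      also have "\<dots> \<le> real k/(lam*t0)" using lr t00 by (intro divide_left_mono) auto
      finally show ?thesis unfolding b_def using lam_pos by linarith
    qed
    show "e * Vt t x - Stf A j t x \<le> (e * Vxx t x - Sxxf A j t x) + b t * (e * Vx t x - Sxf A j t x) + a * (e * V j t x - SVf A j t x)"
      if "t > 0" "x > 0" for t x
    proof -
      have t': "t \<ge> 0" "x \<ge> 0" using that by auto
      define src where "src = (if j < k then \<alpha> * V (j+1) t (x + ln (t + t0) / sqrt a) else 0)"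
      have eq: "Vt t x = Vxx t x + b t * Vx t x + a * V j t x + src"
        using D[OF that] unfolding b_def src_def lam_def \<rho>_def by (simp add: algebra_simps)
      have op: "Stf A j t x - 2*lam*Sxf A j t x + L_rhs_coeff k j/(lam*\<rho> t)*Sxf A j t x - Sxxf A j t x - a*SVf A j t x
         \<ge> (if j < k then \<alpha> * SVf A' (j+1) t (x + ln (\<rho> t)/lam) else 0)"
        by (rule Op[OF t' j A])
      have srcb: "e * src \<le> (if j < k then \<alpha> * SVf A' (j+1) t (x + ln (\<rho> t)/lam) else 0)"
      proof (cases "j < k")
        case True
        have m0: "ln (\<rho> t)/lam \<ge> 0" using ln_rho_ge[OF t'(1)] lam_pos by simp
        have "e * src = \<alpha> * (e * V (j+1) t (x + ln (\<rho> t)/lam))"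
          unfolding src_def \<rho>_def lam_def using True by simp
        also have "\<dots> \<le> \<alpha> * \<bar>V (j+1) t (x + ln (\<rho> t)/lam)\<bar>"
          using \<alpha> e by (intro mult_left_mono) auto
        also have "\<dots> \<le> \<alpha> * SVf A' (j+1) t (x + ln (\<rho> t)/lam)"
          using IH[OF True] t' m0 \<alpha> by (intro mult_left_mono) auto
        finally show ?thesis using True by simp
      next
        case False thus ?thesis unfolding src_def by simp
      qed
      have "e * Vt t x = e * Vxx t x + b t * (e * Vx t x) + a * (e * V j t x) + e * src"
        unfolding eq by (simp add: algebra_simps)
      moreover have "b t * Sxf A j t x = 2*lam*Sxf A j t x - L_rhs_coeff k j/(lam*\<rho> t)*Sxf A j t x"
        unfolding b_def by (simp add: algebra_simps)
      ultimately show ?thesis using op srcb by (simp add: algebra_simps)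
    qed
  qed (use tx in auto)
  thus ?thesis by simp
qed





lemma abs_step:
  fixes V0 :: "nat \<Rightarrow> real \<Rightarrow> real" and V :: "nat \<Rightarrow> real \<Rightarrow> real \<Rightarrow> real"
  assumes sol: "is_sol_L a k \<alpha> t0 V0 V" and j: "1 \<le> j" "j \<le> k"
    and A: "A \<ge> 0" "A' \<ge> 0" "\<alpha> * A' \<le> A"
    and init: "\<And>x. x \<ge> 0 \<Longrightarrow> \<bar>V0 j x\<bar> \<le> SVf A j 0 x"
    and IH: "j < k \<Longrightarrow> \<forall>t\<ge>0. \<forall>x\<ge>0. \<bar>V (j+1) t x\<bar> \<le> SVf A' (j+1) t x"
  shows "\<forall>t\<ge>0. \<forall>x\<ge>0. \<bar>V j t x\<bar> \<le> SVf A j t x"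
proof (intro allI impI)
  fix t x :: real assume tx: "t \<ge> 0" "x \<ge> 0"
  have 1: "1 * V j t x \<le> SVf A j t x" by (rule step[OF sol j A init IH _ tx]) auto
  have 2: "(-1) * V j t x \<le> SVf A j t x" by (rule step[OF sol j A init IH _ tx]) auto
  show "\<bar>V j t x\<bar> \<le> SVf A j t x" using 1 2 by linarith
qed

lemma all_bounds:
  fixes V0 :: "nat \<Rightarrow> real \<Rightarrow> real" and V :: "nat \<Rightarrow> real \<Rightarrow> real \<Rightarrow> real" and Am :: "nat \<Rightarrow> real"
  assumes sol: "is_sol_L a k \<alpha> t0 V0 V"
    and Am0: "\<And>j. Am j \<ge> 0" and Amd: "\<And>j. j < k \<Longrightarrow> \<alpha> * Am (j+1) \<le> Am j"
    and init: "\<And>j x. j \<in> {1..k} \<Longrightarrow> x \<ge> 0 \<Longrightarrow> \<bar>V0 j x\<bar> \<le> SVf (Am j) j 0 x"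
  shows "\<And>j t x. j \<in> {1..k} \<Longrightarrow> t \<ge> 0 \<Longrightarrow> x \<ge> 0 \<Longrightarrow> \<bar>V j t x\<bar> \<le> SVf (Am j) j t x"
proof -
  have main: "\<forall>t\<ge>0. \<forall>x\<ge>0. \<bar>V (k-n) t x\<bar> \<le> SVf (Am (k-n)) (k-n) t x" if "n < k" for n
    using that
  proof (induction n)
    case 0
    have k1: "1 \<le> k" using k by simp
    have "\<forall>t\<ge>0. \<forall>x\<ge>0. \<bar>V k t x\<bar> \<le> SVf (Am k) k t x"
    proof (rule abs_step[where A'=0])
      show "\<bar>V0 k x\<bar> \<le> SVf (Am k) k 0 x" if "x \<ge> 0" for x using init[of k x] that k1 by simp
    qed (use sol k1 \<alpha> Am0 in auto)
    thus ?case by simp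
  next
    case (Suc n)
    define j where "j = k - Suc n"
    have j: "1 \<le> j" "j \<le> k" "j < k" using Suc.prems unfolding j_def by auto
    have j1: "j + 1 = k - n" unfolding j_def using Suc.prems by simp
    have IH: "\<forall>t\<ge>0. \<forall>x\<ge>0. \<bar>V (j+1) t x\<bar> \<le> SVf (Am (j+1)) (j+1) t x"
      using Suc.IH Suc.prems unfolding j1 by simp
    have "\<forall>t\<ge>0. \<forall>x\<ge>0. \<bar>V j t x\<bar> \<le> SVf (Am j) j t x"
      by (rule abs_step[OF sol j(1,2) Am0 Am0 Amd[OF j(3)] init IH]) (use j in auto)
    thus ?case unfolding j_def .
  qed
  fix j :: nat and t x :: real assume j: "j \<in> {1..k}" and tx: "t \<ge> 0" "x \<ge> 0"
  have "k - (k - j) = j" using j by auto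
  moreover have "k - j < k" using j by auto
  ultimately show "\<bar>V j t x\<bar> \<le> SVf (Am j) j t x" using main[of "k - j"] tx by metis
qed

lemma SV_mono_A: assumes "t \<ge> 0" "x \<ge> 0" "A \<le> B" shows "SVf A j t x \<le> SVf B j t x"
proof -
  have "gf t * (x + hf j t) * exp (- lam * x) * exp (- x\<^sup>2 / (4 * \<sigma>f t)) \<ge> 0"
    using assms gf_pos[of t] hf_nonneg[of j t] by simp
  thus ?thesis unfolding SVf_def using assms mult_right_mono[OF assms(3)] by (simp add: mult.assoc)
qed

lemma init_one:
  fixes V0 :: "nat \<Rightarrow> real \<Rightarrow> real"
  assumes cont: "continuous_on {0..} (V0 j)"
    and supp: "\<exists>a b. 0 < a \<and> a \<le> b \<and> (\<forall>x. x \<notin> {a..b} \<longrightarrow> V0 j x = 0)"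
  shows "\<exists>A\<ge>0. \<forall>x\<ge>0. \<bar>V0 j x\<bar> \<le> SVf A j 0 x"
proof -
  obtain aa bb where ab: "0 < aa" "aa \<le> bb" and z: "\<And>x. x \<notin> {aa..bb} \<Longrightarrow> V0 j x = 0" using supp by blast
  have "compact (V0 j ` {aa..bb})"
    using ab by (intro compact_continuous_image continuous_on_subset[OF cont]) auto
  then obtain M where M: "\<And>x. x \<in> {aa..bb} \<Longrightarrow> \<bar>V0 j x\<bar> \<le> M"
    using compact_imp_bounded bounded_iff by (metis image_eqI real_norm_def)
  have M0: "M \<ge> 0" using M[of aa] ab by simp
  define \<kappa> where "\<kappa> = gf 0 * aa * exp(-lam*bb) * exp(-bb\<^sup>2/(4*\<sigma>f 0))"
  have \<kappa>0: "\<kappa> > 0" unfolding \<kappa>_def using gf_pos[of 0] ab by simp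
  define A where "A = M / \<kappa>"
  have A0: "A \<ge> 0" unfolding A_def using M0 \<kappa>0 by simp
  have "\<bar>V0 j x\<bar> \<le> SVf A j 0 x" if x: "x \<ge> 0" for x
  proof (cases "x \<in> {aa..bb}")
    case False
    thus ?thesis using z[OF False] SV_nonneg[of 0 x A j] x A0 by simp
  next
    case True
    have s0: "\<sigma>f 0 > 0" using sigma_pos[of 0] by simp
    have f1: "gf 0 * aa \<le> gf 0 * (x + hf j 0)" using True hf_nonneg[of j 0] gf_pos[of 0]
      by (intro mult_left_mono) auto
    have f2: "exp(-lam*bb) \<le> exp(-lam*x)" using True lam_pos by simp
    have "x\<^sup>2 \<le> bb\<^sup>2" using True ab by (intro power_mono) auto
    hence f3: "exp(-bb\<^sup>2/(4*\<sigma>f 0)) \<le> exp(-x\<^sup>2/(4*\<sigma>f 0))" using s0 by (simp add: divide_right_mono)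
    have "\<kappa> \<le> gf 0 * (x + hf j 0) * exp(-lam*x) * exp(-x\<^sup>2/(4*\<sigma>f 0))"
      unfolding \<kappa>_def using f1 f2 f3 gf_pos[of 0] ab
      by (intro mult_mono) (auto intro: mult_nonneg_nonneg)
    hence "A * \<kappa> \<le> A * (gf 0 * (x + hf j 0) * exp(-lam*x) * exp(-x\<^sup>2/(4*\<sigma>f 0)))"
      using A0 by (intro mult_left_mono) auto
    moreover have "A * \<kappa> = M" unfolding A_def using \<kappa>0 by simp
    ultimately show ?thesis using M[OF True] unfolding SVf_def by (simp add: mult.assoc)
  qed
  thus ?thesis using A0 by blast
qed




lemma wbound:
  fixes V :: "nat \<Rightarrow> real \<Rightarrow> real \<Rightarrow> real" and Am :: "nat \<Rightarrow> real"
  assumes bnd: "\<And>j t x. j \<in> {1..k} \<Longrightarrow> t \<ge> 0 \<Longrightarrow> x \<ge> 0 \<Longrightarrow> \<bar>V j t x\<bar> \<le> SVf (Am j) j t x"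
   and Am: "\<And>j. j \<in> {1..k} \<Longrightarrow> 0 \<le> Am j \<and> Am j \<le> Amx"
   and \<tau>: "\<tau> \<ge> 0" and i: "i \<in> {1..k}" and \<eta>: "\<eta> > 0"
  shows "(w_of a t0 V i \<tau> \<eta>)\<^sup>2 \<le> t0 * Amx\<^sup>2 * (exp 3 * (16 + 512*\<beta>\<^sup>2) * exp(-\<eta>/2))"
proof -
  define s where "s = t0 * exp \<tau>"
  define t where "t = s - t0"
  define r where "r = sqrt s"
  define x where "x = \<eta> * r"
  have e\<tau>: "exp \<tau> \<ge> 1" using \<tau> by simp
  have s16: "s \<ge> 16" unfolding s_def using t0 e\<tau> mult_mono[of 16 t0 1 "exp \<tau>"] by simp
  have t0': "t \<ge> 0" unfolding t_def s_def using t0 e\<tau> mult_left_mono[of 1 "exp \<tau>" t0] by simp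
  have \<rho>s: "\<rho> t = s" unfolding \<rho>_def t_def by simp
  have r4: "r \<ge> 4" unfolding r_def using s16 real_sqrt_le_mono[of 16 s] by simp
  have rr: "r * r = s" unfolding r_def using s16 by simp
  have x0: "x \<ge> 0" unfolding x_def using \<eta> r4 by simp
  define A where "A = Am i"
  have A: "0 \<le> A" "A \<le> Amx" using Am[OF i] unfolding A_def by auto
  define g where "g = gf t"
  have g: "0 < g" "g \<le> 1" unfolding g_def using gf_pos gf_le1[OF t0'] by auto
  define h where "h = hf i t"
  have h0: "h \<ge> 0" unfolding h_def using hf_nonneg .
  define \<sigma> where "\<sigma> = \<sigma>f t"
  have \<sigma>s: "\<sigma> = s + 2*r" unfolding \<sigma>_def \<sigma>f_def \<rho>s r_def ..
  have \<sigma>0: "\<sigma> > 0" using \<sigma>s s16 r4 by simp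
  have w: "w_of a t0 V i \<tau> \<eta> = exp(lam * x) * exp(-\<tau>/2) * exp(\<eta>\<^sup>2/8) * V i t x"
    unfolding w_of_def Let_def lam_def x_def r_def s_def t_def by simp
  define Wb where "Wb = exp(-\<tau>/2 + \<eta>\<^sup>2/8 - x\<^sup>2/(4*\<sigma>)) * (A*g*(x+h))"
  have absw: "\<bar>w_of a t0 V i \<tau> \<eta>\<bar> \<le> Wb"
  proof -
    have "\<bar>w_of a t0 V i \<tau> \<eta>\<bar> = exp(lam * x) * exp(-\<tau>/2) * exp(\<eta>\<^sup>2/8) * \<bar>V i t x\<bar>"
      unfolding w by (simp add: abs_mult)
    also have "\<dots> \<le> exp(lam * x) * exp(-\<tau>/2) * exp(\<eta>\<^sup>2/8) * SVf A i t x"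
      using bnd[OF i t0' x0] unfolding A_def by (intro mult_left_mono) auto
    also have "\<dots> = Wb"
    proof -
      have "exp(lam * x) * exp(-lam*x) = 1" by (simp add: exp_add[symmetric])
      have "exp(lam * x) * exp(-\<tau>/2) * exp(\<eta>\<^sup>2/8) * SVf A i t x
          = (exp(lam * x) * exp(-lam*x)) * (exp(-\<tau>/2) * exp(\<eta>\<^sup>2/8) * exp(-x\<^sup>2/(4*\<sigma>))) * (A*g*(x+h))"
        unfolding SVf_def g_def h_def \<sigma>_def by (simp add: algebra_simps)
      also have "\<dots> = Wb"
      proof -
        have "exp(-\<tau>/2 + \<eta>\<^sup>2/8 - x\<^sup>2/(4*\<sigma>)) = exp((-\<tau>/2) + (\<eta>\<^sup>2/8) + (-x\<^sup>2/(4*\<sigma>)))" by simp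
        also have "\<dots> = exp(-\<tau>/2) * exp(\<eta>\<^sup>2/8) * exp(-x\<^sup>2/(4*\<sigma>))" by (simp only: exp_add)
        finally have ee: "exp(-\<tau>/2) * exp(\<eta>\<^sup>2/8) * exp(-x\<^sup>2/(4*\<sigma>)) = exp(-\<tau>/2 + \<eta>\<^sup>2/8 - x\<^sup>2/(4*\<sigma>))" by simp
        show ?thesis unfolding Wb_def ee \<open>exp(lam * x) * exp(-lam*x) = 1\<close> by simp
      qed
      finally show ?thesis .
    qed
    finally show ?thesis .
  qed
  have w2: "(w_of a t0 V i \<tau> \<eta>)\<^sup>2 \<le> Wb\<^sup>2"
  proof -
    have "\<bar>w_of a t0 V i \<tau> \<eta>\<bar>\<^sup>2 \<le> Wb\<^sup>2" by (rule power_mono[OF absw abs_ge_zero])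
    thus ?thesis by simp
  qed
  have Wb2: "Wb\<^sup>2 = exp(-\<tau> + \<eta>\<^sup>2/4 - x\<^sup>2/(2*\<sigma>)) * (A*g*(x+h))\<^sup>2"
  proof -
    have "(exp(-\<tau>/2 + \<eta>\<^sup>2/8 - x\<^sup>2/(4*\<sigma>)))\<^sup>2 = exp(2*(-\<tau>/2 + \<eta>\<^sup>2/8 - x\<^sup>2/(4*\<sigma>)))"
      by (simp add: power2_eq_square exp_add[symmetric])
    also have "2*(-\<tau>/2 + \<eta>\<^sup>2/8 - x\<^sup>2/(4*\<sigma>)) = -\<tau> + \<eta>\<^sup>2/4 - x\<^sup>2/(2*\<sigma>)" by (simp add: field_simps)
    finally show ?thesis unfolding Wb_def by (simp add: power_mult_distrib)
  qed
  have ex1: "exp(-\<tau> + \<eta>\<^sup>2/4 - x\<^sup>2/(2*\<sigma>)) \<le> (t0/s) * exp(-\<eta>\<^sup>2/12)"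
  proof -
    have "4*r \<le> r*r" using r4 mult_right_mono[of 4 r r] by simp
    hence "2*\<sigma> \<le> 3 * s" using \<sigma>s rr by linarith
    hence "x\<^sup>2/(2*\<sigma>) \<ge> x\<^sup>2/(3 * s)" using \<sigma>0 s16 by (intro divide_left_mono) auto
    moreover have "x\<^sup>2/(3 * s) = \<eta>\<^sup>2/3" unfolding x_def using rr s16 by (simp add: power2_eq_square field_simps)
    ultimately have "-\<tau> + \<eta>\<^sup>2/4 - x\<^sup>2/(2*\<sigma>) \<le> -\<tau> + (-\<eta>\<^sup>2/12)" by simp
    hence "exp(-\<tau> + \<eta>\<^sup>2/4 - x\<^sup>2/(2*\<sigma>)) \<le> exp(-\<tau>) * exp(-\<eta>\<^sup>2/12)" by (simp add: exp_add[symmetric])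
    moreover have "exp(-\<tau>) = t0/s" unfolding s_def using t0 by (simp add: exp_minus field_simps)
    ultimately show ?thesis by simp
  qed
  have hb: "h\<^sup>2 \<le> 256 * \<beta>\<^sup>2 * s"
  proof (cases "i < k")
    case True
    have "h\<^sup>2 = \<beta>\<^sup>2 * (ln s)^4" unfolding h_def hf_def \<rho>s using True by (simp add: power_mult_distrib power_mult[symmetric])
    also have "\<dots> \<le> \<beta>\<^sup>2 * (256 * s)" using ln4[of s] s16 by (intro mult_left_mono) auto
    finally show ?thesis by simp
  next
    case False thus ?thesis unfolding h_def hf_def using s16 by simp
  qed
  have xh: "(x+h)\<^sup>2 \<le> s * (2*\<eta>\<^sup>2 + 512*\<beta>\<^sup>2)"
  proof -
    have "0 \<le> (x-h)\<^sup>2" by simp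
    moreover have "(x+h)\<^sup>2 = 2*x\<^sup>2 + 2*h\<^sup>2 - (x-h)\<^sup>2" by (simp add: power2_eq_square algebra_simps)
    ultimately have "(x+h)\<^sup>2 \<le> 2*x\<^sup>2 + 2*h\<^sup>2" by linarith
    moreover have "x\<^sup>2 = \<eta>\<^sup>2 * s" unfolding x_def using rr by (simp add: power2_eq_square algebra_simps)
    ultimately show ?thesis using hb by (simp add: algebra_simps)
  qed
  have Ag: "(A*g*(x+h))\<^sup>2 \<le> Amx\<^sup>2 * (x+h)\<^sup>2"
  proof -
    have "A*g \<le> Amx" using A g mult_mono[of A Amx g 1] by simp
    moreover have "A*g \<ge> 0" using A g by simp
    ultimately have "(A*g)\<^sup>2 \<le> Amx\<^sup>2" by (simp add: power_mono)
    thus ?thesis by (simp add: power_mult_distrib mult_right_mono)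
  qed
  have "(w_of a t0 V i \<tau> \<eta>)\<^sup>2 \<le> ((t0/s) * exp(-\<eta>\<^sup>2/12)) * (Amx\<^sup>2 * (s * (2*\<eta>\<^sup>2 + 512*\<beta>\<^sup>2)))"
  proof -
    have "Wb\<^sup>2 \<le> ((t0/s) * exp(-\<eta>\<^sup>2/12)) * (Amx\<^sup>2 * (x+h)\<^sup>2)"
      unfolding Wb2 using ex1 Ag t0 s16 by (intro mult_mono) auto
    also have "\<dots> \<le> ((t0/s) * exp(-\<eta>\<^sup>2/12)) * (Amx\<^sup>2 * (s * (2*\<eta>\<^sup>2 + 512*\<beta>\<^sup>2)))"
      using xh t0 s16 by (intro mult_left_mono) auto
    finally show ?thesis using w2 by linarith
  qed
  also have "\<dots> = t0 * Amx\<^sup>2 * ((2*\<eta>\<^sup>2 + 512*\<beta>\<^sup>2) * exp(-\<eta>\<^sup>2/12))" using s16 by (simp add: field_simps)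
  also have "\<dots> \<le> t0 * Amx\<^sup>2 * (exp 3 * (16 + 512*\<beta>\<^sup>2) * exp(-\<eta>/2))"
    using tail_bound[of \<eta> "512*\<beta>\<^sup>2"] \<eta> t0 by (intro mult_left_mono) auto
  finally show ?thesis .
qed

lemma L2:
  fixes V :: "nat \<Rightarrow> real \<Rightarrow> real \<Rightarrow> real" and Am :: "nat \<Rightarrow> real"
  assumes bnd: "\<And>j t x. j \<in> {1..k} \<Longrightarrow> t \<ge> 0 \<Longrightarrow> x \<ge> 0 \<Longrightarrow> \<bar>V j t x\<bar> \<le> SVf (Am j) j t x"
   and Am: "\<And>j. j \<in> {1..k} \<Longrightarrow> 0 \<le> Am j \<and> Am j \<le> Amx"
   and cont: "\<And>j. j \<in> {1..k} \<Longrightarrow> continuous_on ({0..} \<times> {0..}) (\<lambda>(t,x). V j t x)"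
  shows "\<exists>C>0. \<forall>\<tau>\<ge>0. \<forall>i\<in>{1..k}. (\<lambda>\<eta>. (w_of a t0 V i \<tau> \<eta>)\<^sup>2) integrable_on {0<..}
            \<and> sqrt (integral {0<..} (\<lambda>\<eta>. (w_of a t0 V i \<tau> \<eta>)\<^sup>2)) \<le> C"
proof -
  define Cst where "Cst = t0 * Amx\<^sup>2 * (exp 3 * (16 + 512*\<beta>\<^sup>2))"
  define F where "F = (\<lambda>\<eta>::real. Cst * exp(-\<eta>/2))"
  have Fi: "F integrable_on {0<..}" unfolding F_def by (rule exp_half_integrable)
  define C where "C = \<bar>sqrt (integral {0<..} F)\<bar> + 1"
  have C0: "C > 0" unfolding C_def by simp
  have S: "({0<..} :: real set) \<in> sets lebesgue" by simp
  have "(\<lambda>\<eta>. (w_of a t0 V i \<tau> \<eta>)\<^sup>2) integrable_on {0<..}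
            \<and> sqrt (integral {0<..} (\<lambda>\<eta>. (w_of a t0 V i \<tau> \<eta>)\<^sup>2)) \<le> C" if \<tau>: "\<tau> \<ge> 0" and i: "i \<in> {1..k}" for \<tau> i
  proof -
    define f where "f = (\<lambda>\<eta>. (w_of a t0 V i \<tau> \<eta>)\<^sup>2)"
    have fF: "f \<eta> \<le> F \<eta>" if "\<eta> \<in> {0<..}" for \<eta>
      using wbound[OF bnd Am \<tau> i, of \<eta>] that unfolding f_def F_def Cst_def by (simp add: mult.assoc)
    define c where "c = sqrt (t0 * exp \<tau>)"
    define t1 where "t1 = t0 * exp \<tau> - t0"
    have c0: "c \<ge> 0" unfolding c_def using t0 by simp
    have t10: "t1 \<ge> 0" unfolding t1_def using t0 \<tau> mult_left_mono[of 1 "exp \<tau>" t0] by simp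
    have cV: "continuous_on {0<..} (\<lambda>\<eta>. V i t1 (\<eta> * c))"
    proof -
      have "continuous_on {0<..} (\<lambda>\<eta>::real. (\<lambda>(t,x). V i t x) (t1, \<eta> * c))"
        by (rule continuous_on_compose2[OF cont[OF i]]) (use t10 c0 in \<open>auto intro!: continuous_intros\<close>)
      thus ?thesis by simp
    qed
    have fc: "continuous_on {0<..} f"
      unfolding f_def w_of_def Let_def
      using cV unfolding c_def t1_def by (intro continuous_intros) auto
    have fm: "f \<in> borel_measurable (lebesgue_on {0<..})"
      by (rule continuous_imp_measurable_on_sets_lebesgue[OF fc S])
    have fi: "f integrable_on {0<..}"
      by (rule measurable_bounded_by_integrable_imp_integrable_real[OF fm Fi _ S]) (use fF in \<open>simp add: f_def\<close>)
    have "integral {0<..} f \<le> integral {0<..} F" by (rule integral_le[OF fi Fi fF])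
    hence "sqrt (integral {0<..} f) \<le> sqrt (integral {0<..} F)" by simp
    also have "\<dots> \<le> C" unfolding C_def by simp
    finally show ?thesis using fi unfolding f_def by simp
  qed
  thus ?thesis using C0 by blast
qed


end

theorem lemma4p2:
  fixes f f1 f2 :: "real \<Rightarrow> real" and k :: nat and \<alpha> :: real
    and V0 :: "nat \<Rightarrow> real \<Rightarrow> real"
  assumes f_C2: "\<And>s. s \<in> {0..1} \<Longrightarrow> (f has_real_derivative f1 s) (at s within {0..1})"
        "\<And>s. s \<in> {0..1} \<Longrightarrow> (f1 has_real_derivative f2 s) (at s within {0..1})"
        "continuous_on {0..1} f2"
    and f_bd: "f 0 = 0" "f 1 = 0" "f1 0 > 0" "f1 1 < 0"
    and f_KPP: "\<And>s. s \<in> {0<..<1} \<Longrightarrow> 0 < f s \<and> f s \<le> f1 0 * s"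
    and k: "k \<ge> 2" and \<alpha>: "\<alpha> > 0"
    and V0_nonneg: "\<And>i x. i \<in> {1..k} \<Longrightarrow> V0 i x \<ge> 0"
    and V0_cont: "\<And>i. i \<in> {1..k} \<Longrightarrow> continuous_on {0..} (V0 i)"
    and V0_supp: "\<And>i. i \<in> {1..k} \<Longrightarrow>
                    \<exists>a b. 0 < a \<and> a \<le> b \<and> (\<forall>x. x \<notin> {a..b} \<longrightarrow> V0 i x = 0)"
    and V0_nontriv: "\<And>i. i \<in> {1..k} \<Longrightarrow> \<exists>x>0. V0 i x \<noteq> 0"
  shows "\<exists>T. \<forall>t0. t0 > 0 \<and> t0 \<ge> T \<longrightarrow>
           (\<forall>V. is_sol_L (f1 0) k \<alpha> t0 V0 V \<longrightarrow>
              (\<exists>C>0. \<forall>\<tau>\<ge>0. \<forall>i\<in>{1..k}.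
                  (\<lambda>\<eta>. (w_of (f1 0) t0 V i \<tau> \<eta>)\<^sup>2) integrable_on {0<..}
                \<and> sqrt (integral {0<..} (\<lambda>\<eta>. (w_of (f1 0) t0 V i \<tau> \<eta>)\<^sup>2)) \<le> C))"
proof (rule exI[of _ 16], intro allI impI)
  fix t0 :: real and V :: "nat \<Rightarrow> real \<Rightarrow> real \<Rightarrow> real"
  assume t0: "0 < t0 \<and> 16 \<le> t0" and sol: "is_sol_L (f1 0) k \<alpha> t0 V0 V"
  interpret K: kpp "f1 0" t0 \<alpha> k
    by unfold_locales (use f_bd t0 \<alpha> k in auto)
  have ex: "\<forall>j\<in>{1..k}. \<exists>A\<ge>0. \<forall>x\<ge>0. \<bar>V0 j x\<bar> \<le> K.SVf A j 0 x"
    using K.init_one V0_cont V0_supp by blast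
  then obtain Af where Af: "\<And>j. j \<in> {1..k} \<Longrightarrow> Af j \<ge> 0 \<and> (\<forall>x\<ge>0. \<bar>V0 j x\<bar> \<le> K.SVf (Af j) j 0 x)"
    by metis
  define Amp where "Amp = (\<Sum>j\<in>{1..k}. Af j)"
  have Amp: "Af j \<le> Amp" if "j \<in> {1..k}" for j
    unfolding Amp_def using Af that by (intro member_le_sum) auto
  have Amp0: "Amp \<ge> 0" unfolding Amp_def using Af by (intro sum_nonneg) auto
  define Am where "Am j = Amp * (\<alpha>+1)^(k-j)" for j
  have pw1: "(\<alpha>+1)^n \<ge> 1" for n using \<alpha> by simp
  have Am0: "Am j \<ge> 0" for j unfolding Am_def using Amp0 \<alpha> by simp
  have AmA: "Am j \<ge> Amp" for j unfolding Am_def using mult_left_mono[OF pw1 Amp0] by simp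
  have Amd: "\<alpha> * Am (j+1) \<le> Am j" if "j < k" for j
  proof -
    have "k - j = Suc (k - (j+1))" using that by simp
    hence "Am j = (\<alpha>+1) * (Amp * (\<alpha>+1)^(k-(j+1)))" unfolding Am_def by (simp add: algebra_simps)
    moreover have "Amp * (\<alpha>+1)^(k-(j+1)) \<ge> 0" using Amp0 \<alpha> by simp
    ultimately show ?thesis unfolding Am_def by (simp add: algebra_simps)
  qed
  have init: "\<bar>V0 j x\<bar> \<le> K.SVf (Am j) j 0 x" if "j \<in> {1..k}" "x \<ge> 0" for j x
  proof -
    have "\<bar>V0 j x\<bar> \<le> K.SVf (Af j) j 0 x" using Af that by blast
    also have "\<dots> \<le> K.SVf (Am j) j 0 x"
      using K.SV_mono_A[of 0 x "Af j" "Am j" j] that Amp[OF that(1)] AmA[of j] by simp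
    finally show ?thesis .
  qed
  have bnd: "\<And>j t x. j \<in> {1..k} \<Longrightarrow> t \<ge> 0 \<Longrightarrow> x \<ge> 0 \<Longrightarrow> \<bar>V j t x\<bar> \<le> K.SVf (Am j) j t x"
    by (rule K.all_bounds[OF sol Am0 Amd init])
  define Amx where "Amx = Amp * (\<alpha>+1)^k"
  have Amx: "0 \<le> Am j \<and> Am j \<le> Amx" if "j \<in> {1..k}" for j
  proof -
    have "(\<alpha>+1)^(k-j) \<le> (\<alpha>+1)^k" using \<alpha> by (intro power_increasing) auto
    thus ?thesis unfolding Am_def Amx_def using Am0[of j] Amp0 unfolding Am_def by (simp add: mult_left_mono)
  qed
  have cont: "continuous_on ({0..} \<times> {0..}) (\<lambda>(t,x). V j t x)" if "j \<in> {1..k}" for j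
    using sol that unfolding is_sol_L_def by blast
  show "\<exists>C>0. \<forall>\<tau>\<ge>0. \<forall>i\<in>{1..k}.
                  (\<lambda>\<eta>. (w_of (f1 0) t0 V i \<tau> \<eta>)\<^sup>2) integrable_on {0<..}
                \<and> sqrt (integral {0<..} (\<lambda>\<eta>. (w_of (f1 0) t0 V i \<tau> \<eta>)\<^sup>2)) \<le> C"
    by (rule K.L2[OF bnd Amx cont])
qed


end
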